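(* Let $\mathcal{A}=\{A_1,\dots,A_m\}$ be a bimodal collection of pairwise disjoint nonempty subsets of a finite abelian group $G$, with internal difference groups $H_1,\dots,H_m$, labelled so that $|A_i|<|H_i|$ exactly for $i=1,\dots,r$, where $r\ge2$. Let $D=(a_1+H_1)\setminus A_1$, where $a_1+H_1$ is the coset of $H_1$ containing $A_1$, and suppose $\mathcal{A}$ is in canonical position, i.e. $D$ is a subgroup of $G$. Let $A=A_1\cup\dots\cup A_m$ and $H=H_1+H_2+\dots+H_r$. If $A\setminus H$ is nonempty, then $A\setminus H$ is a union of cosets of $H$, and the sets $A_i$ lying in $A\setminus H$ arise from a subdivision of these cosets of $H$: they partition $A\setminus H$ and each of them is contained in a single coset of $H$.
   Context: $G$ is written additively. The internal difference group $H_i$ of $A_i$ is the subgroup generated by all $x-y$ with $x,y\in A_i$; $A_i$ lies in a single coset of $H_i$ and $|A_i|\le|H_i|$. A collection $\{A_1,\dots,A_m\}$ of pairwise disjoint subsets of $G$ is bimodal if for every $i$ and every $\delta\in G\setminus\{0\}$, the number $N_i(\delta)$ of pairs $(a,b)$ with $a\in A_i$, $b\in A_j$ for some $j\neq i$, and $a-b=\delta$, satisfies $N_i(\delta)\in\{0,|A_i|\}$. (For such collections with $r\ge2$ the set $D$ equals $(a_i+H_i)\setminus A_i$ for every $i\le r$ and is a coset of a subgroup; canonical position means the collection has been translated so that $D$ is a subgroup.) *)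

theory Defs
  imports Main
begin

definition is_subgroup :: "'a::ab_group_add set \<Rightarrow> bool" where
  "is_subgroup K \<longleftrightarrow> 0 \<in> K \<and> (\<forall>x\<in>K. \<forall>y\<in>K. x - y \<in> K)"

definition gen_subgroup :: "'a::ab_group_add set \<Rightarrow> 'a set" where
  "gen_subgroup X = \<Inter>{K. is_subgroup K \<and> X \<subseteq> K}"

definition diff_group :: "'a::ab_group_add set \<Rightarrow> 'a set" where
  "diff_group S = gen_subgroup {x - y | x y. x \<in> S \<and> y \<in> S}"

definition N_count :: "nat \<Rightarrow> (nat \<Rightarrow> 'a::ab_group_add set) \<Rightarrow> nat \<Rightarrow> 'a \<Rightarrow> nat" where
  "N_count m A i \<delta> = card {(a, b). a \<in> A i \<and> (\<exists>j\<in>{1..m}. j \<noteq> i \<and> b \<in> A j) \<and> a - b = \<delta>}"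

definition bimodal :: "nat \<Rightarrow> (nat \<Rightarrow> 'a::ab_group_add set) \<Rightarrow> bool" where
  "bimodal m A \<longleftrightarrow> (\<forall>i\<in>{1..m}. \<forall>\<delta>. \<delta> \<noteq> 0 \<longrightarrow> N_count m A i \<delta> \<in> {0, card (A i)})"

definition sumset_family :: "nat \<Rightarrow> (nat \<Rightarrow> 'a::ab_group_add set) \<Rightarrow> 'a set" where
  "sumset_family r H = {(\<Sum>i\<in>{1..r}. f i) | f. \<forall>i\<in>{1..r}. f i \<in> H i}"

end

theory Submission imports Defs begin
lemma sg0: "is_subgroup K \<Longrightarrow> 0 \<in> K" by (simp add: is_subgroup_def)
lemma sgdiff: "is_subgroup K \<Longrightarrow> x \<in> K \<Longrightarrow> y \<in> K \<Longrightarrow> x - y \<in> K" by (simp add: is_subgroup_def)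
lemma sgneg: "is_subgroup K \<Longrightarrow> x \<in> K \<Longrightarrow> - x \<in> K"
  using sgdiff[of K 0 x] sg0[of K] by simp
lemma sgadd: "is_subgroup K \<Longrightarrow> x \<in> K \<Longrightarrow> y \<in> K \<Longrightarrow> x + y \<in> K"
  using sgdiff[of K x "-y"] sgneg[of K y] by simp

lemma gen_sg: "is_subgroup (gen_subgroup X)"
  unfolding gen_subgroup_def is_subgroup_def by auto
lemma gen_least: "is_subgroup K \<Longrightarrow> X \<subseteq> K \<Longrightarrow> gen_subgroup X \<subseteq> K"
  unfolding gen_subgroup_def by auto
lemma gen_sub: "X \<subseteq> gen_subgroup X"
  unfolding gen_subgroup_def by auto

lemma dg_sg: "is_subgroup (diff_group S)"
  unfolding diff_group_def by (rule gen_sg)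
lemma dg_mem: "x \<in> S \<Longrightarrow> y \<in> S \<Longrightarrow> x - y \<in> diff_group S"
  unfolding diff_group_def by (rule subsetD[OF gen_sub]) blast
lemma dg_coset: "x \<in> S \<Longrightarrow> S \<subseteq> (\<lambda>h. x + h) ` diff_group S"
proof
  fix y assume "x \<in> S" "y \<in> S"
  then have "y - x \<in> diff_group S" by (rule_tac dg_mem)
  then show "y \<in> (\<lambda>h. x + h) ` diff_group S" by (rule_tac x="y - x" in image_eqI) simp_all
qed

definition stab :: "'a::ab_group_add set \<Rightarrow> 'a set" where
  "stab B = {h. \<forall>x. (x \<in> B) = (x + h \<in> B)}"

lemma stab_sg: "is_subgroup (stab B)"
  unfolding is_subgroup_def stab_def
proof (intro conjI ballI; simp)
  fix h g assume h: "\<forall>x. (x \<in> B) = (x + h \<in> B)" and g: "\<forall>x. (x \<in> B) = (x + g \<in> B)"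
  show "\<forall>x. (x \<in> B) = (x + (h - g) \<in> B)"
  proof
    fix x
    have "(x + (h - g) \<in> B) = (x + (h - g) + g \<in> B)" using g by blast
    also have "\<dots> = (x + h \<in> B)" by (simp add: algebra_simps)
    also have "\<dots> = (x \<in> B)" using h by blast
    finally show "(x \<in> B) = (x + (h - g) \<in> B)" by simp
  qed
qed

lemma stabD1: "h \<in> stab B \<Longrightarrow> x \<in> B \<Longrightarrow> x + h \<in> B" unfolding stab_def by blast
lemma stabD2: "h \<in> stab B \<Longrightarrow> x + h \<in> B \<Longrightarrow> x \<in> B" unfolding stab_def by blast

lemma stab_gen:
  assumes "\<forall>x\<in>B. \<forall>a\<in>S. \<forall>a'\<in>S. x + (a' - a) \<in> B"
  shows "diff_group S \<subseteq> stab B"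
  unfolding diff_group_def
proof (rule gen_least[OF stab_sg])
  show "{x - y |x y. x \<in> S \<and> y \<in> S} \<subseteq> stab B"
  proof clarify
    fix a b assume a: "a \<in> S" and b: "b \<in> S"
    show "a - b \<in> stab B" unfolding stab_def
    proof (clarify, rule iffI)
      fix x assume "x \<in> B" then show "x + (a - b) \<in> B" using assms a b by blast
    next
      fix x assume "x + (a - b) \<in> B"
      then have "x + (a - b) + (b - a) \<in> B" using assms a b by blast
      then show "x \<in> B" by simp
    qed
  qed
qed

lemma stabS1: "K \<subseteq> stab B \<Longrightarrow> h \<in> K \<Longrightarrow> x \<in> B \<Longrightarrow> x + h \<in> B"
  using stabD1 by blast
lemma stabS2: "K \<subseteq> stab B \<Longrightarrow> h \<in> K \<Longrightarrow> x + h \<in> B \<Longrightarrow> x \<in> B"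
  using stabD2 by blast

lemma stab_union: "stab X \<inter> stab Y \<subseteq> stab (X \<union> Y)"
  unfolding stab_def by auto

lemma bim_step:
  fixes A :: "nat \<Rightarrow> 'a::{ab_group_add, finite} set"
  assumes bim: "bimodal m A" and i: "i \<in> {1..m}"
    and B: "B = {b. \<exists>j\<in>{1..m}. j \<noteq> i \<and> b \<in> A j}"
    and dis: "A i \<inter> B = {}"
    and x: "x \<in> B" and a: "a \<in> A i" and a': "a' \<in> A i"
  shows "x + (a' - a) \<in> B"
proof -
  define \<delta> where "\<delta> = a - x"
  have "a \<noteq> x" using dis a x by blast
  then have d0: "\<delta> \<noteq> 0" unfolding \<delta>_def by simp
  define P where "P = {(a, b). a \<in> A i \<and> (\<exists>j\<in>{1..m}. j \<noteq> i \<and> b \<in> A j) \<and> a - b = \<delta>}"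
  have N: "N_count m A i \<delta> = card P" unfolding N_count_def P_def by simp
  have "(a, x) \<in> P" using a x B unfolding P_def \<delta>_def by simp
  then have "card P \<noteq> 0" by auto
  moreover have "N_count m A i \<delta> \<in> {0, card (A i)}" using bim i d0 unfolding bimodal_def by blast
  ultimately have cP: "card P = card (A i)" using N by simp
  have inj: "inj_on fst P" unfolding inj_on_def P_def by auto
  have sub: "fst ` P \<subseteq> A i" unfolding P_def by auto
  have "card (fst ` P) = card (A i)" using card_image[OF inj] cP by simp
  then have "fst ` P = A i" using card_subset_eq[OF _ sub] by simp
  with a' obtain b where "(a', b) \<in> P" by force
  then have "b \<in> B" "b = a' - \<delta>" unfolding P_def B by auto
  then show ?thesis unfolding \<delta>_def by (simp add: algebra_simps)
qed

lemma sumset_sg: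
  assumes "\<forall>i\<in>{1..r}. is_subgroup (K i)"
  shows "is_subgroup (sumset_family r K)"
  unfolding is_subgroup_def sumset_family_def
proof (intro conjI ballI)
  show "0 \<in> {sum f {1..r} |f. \<forall>i\<in>{1..r}. f i \<in> K i}"
    using assms sg0 by (rule_tac CollectI, rule_tac x="\<lambda>_. 0" in exI) auto
next
  fix x y assume "x \<in> {sum f {1..r} |f. \<forall>i\<in>{1..r}. f i \<in> K i}"
     "y \<in> {sum f {1..r} |f. \<forall>i\<in>{1..r}. f i \<in> K i}"
  then obtain f g where f: "x = sum f {1..r}" "\<forall>i\<in>{1..r}. f i \<in> K i"
    and g: "y = sum g {1..r}" "\<forall>i\<in>{1..r}. g i \<in> K i" by blast
  have "x - y = sum (\<lambda>i. f i - g i) {1..r}" using f g by (simp add: sum_subtractf)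
  moreover have "\<forall>i\<in>{1..r}. f i - g i \<in> K i" using f g assms sgdiff by blast
  ultimately show "x - y \<in> {sum f {1..r} |f. \<forall>i\<in>{1..r}. f i \<in> K i}" by blast
qed

lemma sumset_contains:
  assumes "\<forall>i\<in>{1..r}. is_subgroup (K i)" and k: "k \<in> {1..r}"
  shows "K k \<subseteq> sumset_family r K"
proof
  fix h assume h: "h \<in> K k"
  let ?f = "\<lambda>i. if i = k then h else 0"
  have "sum ?f {1..r} = h" using k by simp
  moreover have "\<forall>i\<in>{1..r}. ?f i \<in> K i" using h assms sg0 by auto
  ultimately have "h = sum ?f {1..r} \<and> (\<forall>i\<in>{1..r}. ?f i \<in> K i)" by simp
  then show "h \<in> sumset_family r K" unfolding sumset_family_def by blast
qed

lemma sumset_inv: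
  assumes inv: "\<forall>k\<in>{1..r}. \<forall>x\<in>U. \<forall>h\<in>K k. x + h \<in> U"
    and x: "x \<in> U" and y: "y \<in> sumset_family r K"
  shows "x + y \<in> U"
proof -
  obtain f where f: "y = sum f {1..r}" "\<forall>i\<in>{1..r}. f i \<in> K i"
    using y unfolding sumset_family_def by blast
  have "n \<le> r \<Longrightarrow> \<forall>x\<in>U. x + sum f {1..n} \<in> U" for n
  proof (induction n)
    case 0 then show ?case by simp
  next
    case (Suc n)
    show ?case
    proof
      fix x assume "x \<in> U"
      then have "x + sum f {1..n} \<in> U" using Suc by simp
      moreover have "Suc n \<in> {1..r}" using Suc.prems by simp
      ultimately have "x + sum f {1..n} + f (Suc n) \<in> U" using inv f by blast
      then show "x + sum f {1..Suc n} \<in> U" by (simp add: algebra_simps)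
    qed
  qed
  then show ?thesis using x f by simp
qed

theorem proposition3p9:
  fixes A :: "nat \<Rightarrow> 'a::{ab_group_add, finite} set"
    and m r :: nat and a1 :: 'a
  assumes disj: "\<forall>i\<in>{1..m}. \<forall>j\<in>{1..m}. i \<noteq> j \<longrightarrow> A i \<inter> A j = {}"
    and nonempty: "\<forall>i\<in>{1..m}. A i \<noteq> {}"
    and bim: "bimodal m A"
    and r_ge: "2 \<le> r" and r_le: "r \<le> m"
    and label: "\<forall>i\<in>{1..m}. (card (A i) < card (diff_group (A i)) \<longleftrightarrow> i \<le> r)"
    and a1: "a1 \<in> A 1"
    and canon: "is_subgroup ((\<lambda>h. a1 + h) ` diff_group (A 1) - A 1)"
    and ne: "(\<Union>i\<in>{1..m}. A i) - sumset_family r (\<lambda>i. diff_group (A i)) \<noteq> {}"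
  shows "(let H = sumset_family r (\<lambda>i. diff_group (A i));
              U = (\<Union>i\<in>{1..m}. A i) - H;
              I = {i\<in>{1..m}. A i \<subseteq> U}
          in U = \<Union>{(\<lambda>h. x + h) ` H | x. x \<in> U}
             \<and> (\<Union>i\<in>I. A i) = U
             \<and> (\<forall>i\<in>I. \<forall>j\<in>I. i \<noteq> j \<longrightarrow> A i \<inter> A j = {})
             \<and> (\<forall>i\<in>I. \<exists>x. A i \<subseteq> (\<lambda>h. x + h) ` H))"
proof -
  define AA where "AA = (\<Union>i\<in>{1..m}. A i)"
  define B where "B = (\<lambda>i. {b. \<exists>j\<in>{1..m}. j \<noteq> i \<and> b \<in> A j})"
  define Hg where "Hg = (\<lambda>i. diff_group (A i))"
  define Hs where "Hs = sumset_family r Hg"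
  define U where "U = AA - Hs"
  have dis: "A i \<inter> B i = {}" if "i \<in> {1..m}" for i
    using disj that unfolding B_def by blast
  have AAeq: "AA = A i \<union> B i" if "i \<in> {1..m}" for i
    using that unfolding AA_def B_def by auto
  have BAA: "B i \<subseteq> AA" for i unfolding AA_def B_def by blast
  have stabB: "Hg i \<subseteq> stab (B i)" if i: "i \<in> {1..m}" for i
    unfolding Hg_def
  proof (rule stab_gen, intro ballI)
    fix x a a' assume "x \<in> B i" "a \<in> A i" "a' \<in> A i"
    then show "x + (a' - a) \<in> B i"
      using bim_step[OF bim i B_def[THEN fun_cong, of i] dis[OF i]] by blast
  qed
  have sgH: "is_subgroup (Hg i)" for i unfolding Hg_def by (rule dg_sg)
  have cos: "x \<in> A i \<Longrightarrow> y \<in> A i \<Longrightarrow> y - x \<in> Hg i" for x y i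
    unfolding Hg_def by (rule dg_mem)
  have one: "1 \<in> {1..m}" using r_ge r_le by simp
  have "0 \<in> (\<lambda>h. a1 + h) ` Hg 1 - A 1" using sg0[OF canon] unfolding Hg_def .
  then obtain h0 where h0: "h0 \<in> Hg 1" "0 = a1 + h0" and z1: "0 \<notin> A 1" by auto
  have "a1 = - h0" using h0(2) by (simp add: eq_neg_iff_add_eq_0)
  then have a1H: "a1 \<in> Hg 1" using sgneg[OF sgH h0(1)] by simp
  have A1H: "A 1 \<subseteq> Hg 1"
  proof
    fix y assume "y \<in> A 1"
    then have "y - a1 \<in> Hg 1" using cos a1 by blast
    then have "(y - a1) + a1 \<in> Hg 1" using sgadd[OF sgH _ a1H] by blast
    then show "y \<in> Hg 1" by simp
  qed
  have z: "0 \<notin> AA"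
  proof
    assume "0 \<in> AA"
    then have "0 \<in> B 1" using AAeq[OF one] z1 by blast
    then have "0 + a1 \<in> B 1" by (rule stabS1[OF stabB[OF one] a1H])
    then show False using dis[OF one] a1 by auto
  qed
  have AkH: "A k \<subseteq> Hg k" if k: "k \<in> {1..r}" for k
  proof (cases "k = 1")
    case True then show ?thesis using A1H by simp
  next
    case False
    have km: "k \<in> {1..m}" using k r_le by simp
    obtain ak where ak: "ak \<in> A k" using nonempty km by blast
    have akH: "ak \<in> Hg k"
    proof (rule ccontr)
      assume nak: "ak \<notin> Hg k"
      have HkA: "Hg k \<inter> AA = {}"
      proof (rule ccontr)
        assume "Hg k \<inter> AA \<noteq> {}"
        then obtain h where h: "h \<in> Hg k" "h \<in> AA" by blast
        show False
        proof (cases "h \<in> A k")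
          case True
          then have "ak - h \<in> Hg k" using cos ak by blast
          then have "(ak - h) + h \<in> Hg k" using sgadd[OF sgH _ h(1)] by blast
          then show False using nak by simp
        next
          case False
          then have "h \<in> B k" using h AAeq[OF km] by blast
          then have "0 + h \<in> B k" by simp
          then have "0 \<in> B k" by (rule stabS2[OF stabB[OF km] h(1)])
          then show False using z BAA by blast
        qed
      qed
      have a1Bk: "a1 \<in> B k" using a1 one False unfolding B_def by (auto intro!: bexI[of _ 1])
      have HkH1: "Hg k \<subseteq> Hg 1"
      proof
        fix h assume h: "h \<in> Hg k"
        have "a1 + h \<in> B k" by (rule stabS1[OF stabB[OF km] h a1Bk])
        then have "a1 + h \<in> AA" using BAA by blast
        show "h \<in> Hg 1"
        proof (cases "a1 + h \<in> A 1")
          case True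
          then have "a1 + h \<in> Hg 1" using A1H by blast
          then have "(a1 + h) - a1 \<in> Hg 1" using sgdiff[OF sgH _ a1H] by blast
          then show ?thesis by simp
        next
          case False
          then have "a1 + h \<in> B 1" using \<open>a1 + h \<in> AA\<close> AAeq[OF one] by blast
          then have "(a1 + h) + (- a1) \<in> B 1"
            by (rule stabS1[OF stabB[OF one] sgneg[OF sgH a1H]])
          then have "h \<in> B 1" by simp
          then have "h \<in> AA" using BAA by blast
          then show ?thesis using HkA h by blast
        qed
      qed
      have akB1: "ak \<in> B 1" using ak km False unfolding B_def by (auto intro!: bexI[of _ k])
      have cosAA: "(\<lambda>h. ak + h) ` Hg k \<subseteq> AA"
      proof
        fix y assume "y \<in> (\<lambda>h. ak + h) ` Hg k"
        then obtain h where h: "h \<in> Hg k" "y = ak + h" by blast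
        then have "h \<in> stab (B 1)" using stabB[OF one] HkH1 by blast
        then have "ak + h \<in> B 1" by (rule stabD1[OF _ akB1])
        then show "y \<in> AA" using h BAA by blast
      qed
      have "card (A k) < card (Hg k)" using label km k unfolding Hg_def by simp
      also have "card (Hg k) = card ((\<lambda>h. ak + h) ` Hg k)"
        by (rule card_image[symmetric]) (simp add: inj_on_def)
      finally have "\<not> (\<lambda>h. ak + h) ` Hg k \<subseteq> A k"
        using card_mono[of "A k" "(\<lambda>h. ak + h) ` Hg k"] by auto
      then obtain h where h: "h \<in> Hg k" "ak + h \<notin> A k" by blast
      then have "ak + h \<in> B k" using cosAA AAeq[OF km] by blast
      then have "(ak + h) + (- h) \<in> B k" by (rule stabS1[OF stabB[OF km] sgneg[OF sgH h(1)]])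
      then show False using ak dis[OF km] by auto
    qed
    show ?thesis
    proof
      fix y assume "y \<in> A k"
      then have "y - ak \<in> Hg k" using cos ak by blast
      then have "(y - ak) + ak \<in> Hg k" using sgadd[OF sgH _ akH] by blast
      then show "y \<in> Hg k" by simp
    qed
  qed
  have sgHs: "is_subgroup Hs" unfolding Hs_def by (rule sumset_sg) (simp add: sgH)
  have HkHs: "Hg k \<subseteq> Hs" if "k \<in> {1..r}" for k
    unfolding Hs_def by (rule sumset_contains) (use that sgH in auto)
  have invU: "\<forall>k\<in>{1..r}. \<forall>x\<in>U. \<forall>h\<in>Hg k. x + h \<in> U"
  proof (intro ballI)
    fix k x h assume k: "k \<in> {1..r}" and x: "x \<in> U" and h: "h \<in> Hg k"
    have km: "k \<in> {1..m}" using k r_le by simp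
    have xH: "x \<notin> Hs" using x unfolding U_def by blast
    have "x \<notin> A k" using AkH[OF k] HkHs[OF k] xH by blast
    then have "x \<in> B k" using x AAeq[OF km] unfolding U_def by blast
    then have "x + h \<in> B k" by (rule stabS1[OF stabB[OF km] h])
    then have "x + h \<in> AA" using BAA by blast
    moreover have "x + h \<notin> Hs"
    proof
      assume "x + h \<in> Hs"
      then have "(x + h) - h \<in> Hs" using sgdiff[OF sgHs] HkHs[OF k] h by blast
      then show False using xH by simp
    qed
    ultimately show "x + h \<in> U" unfolding U_def by blast
  qed
  have invU2: "x \<in> U \<Longrightarrow> y \<in> Hs \<Longrightarrow> x + y \<in> U" for x y
    using sumset_inv[OF invU] unfolding Hs_def by blast
  have a1Hs: "a1 \<in> Hs" using a1 A1H HkHs[of 1] r_ge by auto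
  have HjHs: "Hg j \<subseteq> Hs" if j: "j \<in> {1..m}" for j
  proof (cases "j \<le> r")
    case True then show ?thesis using HkHs j by simp
  next
    case False
    obtain aj where aj: "aj \<in> A j" using nonempty j by blast
    have sub: "A j \<subseteq> (\<lambda>h. aj + h) ` Hg j" using dg_coset[OF aj] unfolding Hg_def .
    have "card (A j) \<ge> card (Hg j)" using label j False unfolding Hg_def by auto
    also have "card (Hg j) = card ((\<lambda>h. aj + h) ` Hg j)"
      by (rule card_image[symmetric]) (simp add: inj_on_def)
    finally have Aj: "A j = (\<lambda>h. aj + h) ` Hg j"
      using card_seteq[OF finite sub] by simp
    have "Hg j \<subseteq> stab (A j)"
    proof
      fix h assume h: "h \<in> Hg j"
      show "h \<in> stab (A j)" unfolding stab_def
      proof (clarify, rule iffI)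
        fix x assume "x \<in> A j"
        then obtain g where g: "g \<in> Hg j" "x = aj + g" using Aj by blast
        then have "x + h = aj + (g + h)" by (simp add: algebra_simps)
        moreover have "g + h \<in> Hg j" using sgadd[OF sgH g(1) h] .
        ultimately show "x + h \<in> A j" using Aj by blast
      next
        fix x assume "x + h \<in> A j"
        then obtain g where g: "g \<in> Hg j" "x + h = aj + g" using Aj by blast
        then have "x = aj + (g - h)" by (simp add: algebra_simps)
        moreover have "g - h \<in> Hg j" using sgdiff[OF sgH g(1) h] .
        ultimately show "x \<in> A j" using Aj by blast
      qed
    qed
    then have stAA: "Hg j \<subseteq> stab AA" using stabB[OF j] stab_union[of "A j" "B j"] AAeq[OF j] by auto
    show ?thesis
    proof
      fix h assume h: "h \<in> Hg j"
      show "h \<in> Hs"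
      proof (rule ccontr)
        assume nh: "h \<notin> Hs"
        have "a1 \<in> AA" using a1 one unfolding AA_def by blast
        then have "a1 + h \<in> AA" by (rule stabS1[OF stAA h])
        moreover have "a1 + h \<notin> Hs"
        proof
          assume "a1 + h \<in> Hs"
          then have "(a1 + h) - a1 \<in> Hs" using sgdiff[OF sgHs _ a1Hs] by blast
          then show False using nh by simp
        qed
        ultimately have "a1 + h \<in> U" unfolding U_def by blast
        then have "(a1 + h) + (- a1) \<in> U" by (rule invU2[OF _ sgneg[OF sgHs a1Hs]])
        then have "h \<in> AA" unfolding U_def by simp
        then have "0 + h \<in> AA" by simp
        then have "0 \<in> AA" by (rule stabS2[OF stAA h])
        then show False using z by blast
      qed
    qed
  qed
  have same: "x \<in> A j \<Longrightarrow> y \<in> A j \<Longrightarrow> j \<in> {1..m} \<Longrightarrow> y - x \<in> Hs" for x y j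
    using cos HjHs by blast
  define I where "I = {i\<in>{1..m}. A i \<subseteq> U}"
  have c1: "U = \<Union>{(\<lambda>h. x + h) ` Hs | x. x \<in> U}"
  proof
    show "U \<subseteq> \<Union>{(\<lambda>h. x + h) ` Hs | x. x \<in> U}"
    proof
      fix x assume "x \<in> U"
      moreover have "x \<in> (\<lambda>h. x + h) ` Hs" using sg0[OF sgHs] by (rule_tac x=0 in image_eqI) simp_all
      ultimately show "x \<in> \<Union>{(\<lambda>h. x + h) ` Hs | x. x \<in> U}" by blast
    qed
    show "\<Union>{(\<lambda>h. x + h) ` Hs | x. x \<in> U} \<subseteq> U" using invU2 by blast
  qed
  have c2: "(\<Union>i\<in>I. A i) = U"
  proof
    show "(\<Union>i\<in>I. A i) \<subseteq> U" unfolding I_def by blast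
    show "U \<subseteq> (\<Union>i\<in>I. A i)"
    proof
      fix x assume x: "x \<in> U"
      then obtain j where j: "j \<in> {1..m}" "x \<in> A j" unfolding U_def AA_def by blast
      have "A j \<subseteq> U"
      proof
        fix y assume "y \<in> A j"
        then have "x + (y - x) \<in> U" by (rule invU2[OF x same[OF j(2) _ j(1)]])
        then show "y \<in> U" by simp
      qed
      then show "x \<in> (\<Union>i\<in>I. A i)" using j unfolding I_def by blast
    qed
  qed
  have c3: "\<forall>i\<in>I. \<forall>j\<in>I. i \<noteq> j \<longrightarrow> A i \<inter> A j = {}" using disj unfolding I_def by blast
  have c4: "\<forall>i\<in>I. \<exists>x. A i \<subseteq> (\<lambda>h. x + h) ` Hs"
  proof
    fix i assume "i \<in> I"
    then have i: "i \<in> {1..m}" unfolding I_def by blast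
    obtain a where a: "a \<in> A i" using nonempty i by blast
    have "A i \<subseteq> (\<lambda>h. a + h) ` Hs"
    proof
      fix y assume "y \<in> A i"
      then have "y - a \<in> Hs" by (rule same[OF a _ i])
      then show "y \<in> (\<lambda>h. a + h) ` Hs" by (rule_tac x="y - a" in image_eqI) simp_all
    qed
    then show "\<exists>x. A i \<subseteq> (\<lambda>h. x + h) ` Hs" by blast
  qed
  show ?thesis
    unfolding Let_def using c1 c2 c3 c4 unfolding I_def U_def AA_def Hs_def Hg_def by (intro conjI)
qed

end
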